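(* Let $\Phi\subset QSymm$ be a set of homogeneous elements that is a free polynomial basis of $QSymm$ over $\mathbb{Z}$ (i.e. $QSymm=\mathbb{Z}[\Phi]$ freely). Fix $\varphi\in\Phi$ of weight $n$, let $\chi:QSymm\to\mathbb{Z}$ be the ring homomorphism with $\chi(\varphi)=1$ and $\chi(\varphi')=0$ for $\varphi'\in\Phi\setminus\{\varphi\}$, and put $d_i=\sum_{\mathrm{wt}(\alpha)=i}\chi(M_\alpha)Z_\alpha\in NSymm$. Then $d_i=0$ whenever $n\nmid i$, and $d_0=1,d_n,d_{2n},d_{3n},\dots$ is a divided power sequence in $NSymm$ with $d_{kn}$ homogeneous of weight $kn$. Consequently there is a unique Hopf algebra endomorphism $\mathbf{f}_\varphi$ of $NSymm$ with $\mathbf{f}_\varphi(Z_k)=d_{kn}$ for all $k\ge1$. *)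

theory Defs
  imports Main "HOL-Library.Multiset" "HOL-Library.Function_Algebras"
begin

text \<open>Compositions are lists of positive naturals; weight = sum_list.
  Both QSymm and NSymm are realised as the free Z-module on compositions:
  an element is a finitely supported coefficient function (nat list => int)
  supported on compositions.  In QSymm the coefficient at alpha is that of the
  monomial quasisymmetric function M_alpha; in NSymm it is that of
  Z_alpha = Z_a1 ... Z_ak.\<close>

definition is_comp :: "nat list \<Rightarrow> bool" where
  "is_comp \<alpha> \<longleftrightarrow> (\<forall>a\<in>set \<alpha>. 0 < a)"

definition supp :: "('a \<Rightarrow> int) \<Rightarrow> 'a set" where
  "supp f = {x. f x \<noteq> 0}"

definition zcomp :: "(nat list \<Rightarrow> int) set" where
  "zcomp = {f. finite (supp f) \<and> (\<forall>\<alpha>\<in>supp f. is_comp \<alpha>)}"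

definition bas :: "nat list \<Rightarrow> nat list \<Rightarrow> int" where
  "bas \<alpha> = (\<lambda>\<beta>. if \<beta> = \<alpha> then 1 else 0)"

definition one_z :: "nat list \<Rightarrow> int" where
  "one_z = bas []"

definition scal :: "int \<Rightarrow> (nat list \<Rightarrow> int) \<Rightarrow> (nat list \<Rightarrow> int)" where
  "scal c f = (\<lambda>\<alpha>. c * f \<alpha>)"

definition homogeneous :: "nat \<Rightarrow> (nat list \<Rightarrow> int) \<Rightarrow> bool" where
  "homogeneous w f \<longleftrightarrow> (\<forall>\<alpha>\<in>supp f. sum_list \<alpha> = w)"

fun qsh :: "nat list \<Rightarrow> nat list \<Rightarrow> nat list multiset" where
  "qsh [] ys = {#ys#}"
| "qsh (x # xs) [] = {#x # xs#}"
| "qsh (x # xs) (y # ys) =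
     image_mset ((#) x) (qsh xs (y # ys)) + image_mset ((#) y) (qsh (x # xs) ys)
     + image_mset ((#) (x + y)) (qsh xs ys)"

definition qs_mult :: "(nat list \<Rightarrow> int) \<Rightarrow> (nat list \<Rightarrow> int) \<Rightarrow> (nat list \<Rightarrow> int)" where
  "qs_mult f g = (\<lambda>\<gamma>. \<Sum>\<alpha>\<in>supp f. \<Sum>\<beta>\<in>supp g. f \<alpha> * g \<beta> * int (count (qsh \<alpha> \<beta>) \<gamma>))"

definition qs_prod_list :: "(nat list \<Rightarrow> int) list \<Rightarrow> (nat list \<Rightarrow> int)" where
  "qs_prod_list xs = foldr qs_mult xs one_z"

text \<open>The monomial prod_{x in m} x for a finite multiset m (QSymm is commutative
  and associative, so the order chosen is irrelevant).\<close>
definition qs_monom :: "(nat list \<Rightarrow> int) multiset \<Rightarrow> (nat list \<Rightarrow> int)" where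
  "qs_monom m = qs_prod_list (SOME xs. mset xs = m)"

definition free_poly_basis :: "(nat list \<Rightarrow> int) set \<Rightarrow> bool" where
  "free_poly_basis \<Phi> \<longleftrightarrow>
     \<Phi> \<subseteq> zcomp \<and> (\<forall>\<phi>\<in>\<Phi>. \<exists>w. homogeneous w \<phi>) \<and>
     (\<forall>M c. finite M \<and> (\<forall>m\<in>M. set_mset m \<subseteq> \<Phi>) \<and>
            (\<Sum>m\<in>M. scal (c m) (qs_monom m)) = (\<lambda>_. 0) \<longrightarrow> (\<forall>m\<in>M. c m = 0)) \<and>
     (\<forall>f\<in>zcomp. \<exists>M c. finite M \<and> (\<forall>m\<in>M. set_mset m \<subseteq> \<Phi>) \<and>
            f = (\<Sum>m\<in>M. scal (c m) (qs_monom m)))"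

definition qs_ring_hom :: "((nat list \<Rightarrow> int) \<Rightarrow> int) \<Rightarrow> bool" where
  "qs_ring_hom \<chi> \<longleftrightarrow> \<chi> one_z = 1 \<and>
     (\<forall>f\<in>zcomp. \<forall>g\<in>zcomp. \<chi> (f + g) = \<chi> f + \<chi> g \<and> \<chi> (qs_mult f g) = \<chi> f * \<chi> g)"

definition ns_mult :: "(nat list \<Rightarrow> int) \<Rightarrow> (nat list \<Rightarrow> int) \<Rightarrow> (nat list \<Rightarrow> int)" where
  "ns_mult f g = (\<lambda>\<gamma>. \<Sum>\<alpha>\<in>supp f. \<Sum>\<beta>\<in>supp g. if \<alpha> @ \<beta> = \<gamma> then f \<alpha> * g \<beta> else 0)"

text \<open>Z_0 = 1: prepend a letter only if it is nonzero\<close>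
definition zc :: "nat \<Rightarrow> nat list \<Rightarrow> nat list" where
  "zc i \<beta> = (if i = 0 then \<beta> else i # \<beta>)"

text \<open>Delta(Z_alpha) = sum of Z_beta (x) Z_gamma over this multiset of pairs,
  from Delta(Z_a) = sum_{i+j=a} Z_i (x) Z_j and multiplicativity.\<close>
fun cop :: "nat list \<Rightarrow> (nat list \<times> nat list) multiset" where
  "cop [] = {#([], [])#}"
| "cop (a # \<alpha>) = (\<Sum>i\<in>{0..a}. image_mset (\<lambda>(\<beta>, \<gamma>). (zc i \<beta>, zc (a - i) \<gamma>)) (cop \<alpha>))"

text \<open>elements of NSymm (x) NSymm as coefficient functions on pairs of compositions\<close>
definition coprod :: "(nat list \<Rightarrow> int) \<Rightarrow> (nat list \<times> nat list \<Rightarrow> int)" where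
  "coprod f = (\<lambda>p. \<Sum>\<alpha>\<in>supp f. f \<alpha> * int (count (cop \<alpha>) p))"

definition tens :: "(nat list \<Rightarrow> int) \<Rightarrow> (nat list \<Rightarrow> int) \<Rightarrow> (nat list \<times> nat list \<Rightarrow> int)" where
  "tens f g = (\<lambda>(\<beta>, \<gamma>). f \<beta> * g \<gamma>)"

definition counit :: "(nat list \<Rightarrow> int) \<Rightarrow> int" where
  "counit f = f []"

text \<open>h (x) h applied to an element of the tensor square (linear extension)\<close>
definition tens_map :: "((nat list \<Rightarrow> int) \<Rightarrow> (nat list \<Rightarrow> int)) \<Rightarrow>
     (nat list \<times> nat list \<Rightarrow> int) \<Rightarrow> (nat list \<times> nat list \<Rightarrow> int)" where
  "tens_map h T = (\<Sum>q\<in>supp T. (\<lambda>p. T q * tens (h (bas (fst q))) (h (bas (snd q))) p))"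

text \<open>Hopf algebra endomorphism of NSymm (= bialgebra endomorphism; compatibility
  with the antipode is automatic).\<close>
definition ns_hopf_endo :: "((nat list \<Rightarrow> int) \<Rightarrow> (nat list \<Rightarrow> int)) \<Rightarrow> bool" where
  "ns_hopf_endo h \<longleftrightarrow> (\<forall>x\<in>zcomp. h x \<in> zcomp) \<and> h one_z = one_z \<and>
     (\<forall>x\<in>zcomp. \<forall>y\<in>zcomp. h (x + y) = h x + h y \<and> h (ns_mult x y) = ns_mult (h x) (h y)) \<and>
     (\<forall>x\<in>zcomp. counit (h x) = counit x \<and> coprod (h x) = tens_map h (coprod x))"

definition dseq :: "((nat list \<Rightarrow> int) \<Rightarrow> int) \<Rightarrow> nat \<Rightarrow> (nat list \<Rightarrow> int)" where
  "dseq \<chi> i = (\<lambda>\<alpha>. if is_comp \<alpha> \<and> sum_list \<alpha> = i then \<chi> (bas \<alpha>) else 0)"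

end

theory Submission
  imports Defs
begin

definition gb :: "'a \<Rightarrow> 'a \<Rightarrow> int" where "gb x = (\<lambda>y. if y = x then 1 else 0)"
definition sc :: "int \<Rightarrow> ('a \<Rightarrow> int) \<Rightarrow> ('a \<Rightarrow> int)" where "sc c u = (\<lambda>x. c * u x)"
definition lin :: "('a \<Rightarrow> 'b \<Rightarrow> int) \<Rightarrow> ('a \<Rightarrow> int) \<Rightarrow> ('b \<Rightarrow> int)" where
  "lin L u = (\<lambda>z. \<Sum>x\<in>supp u. u x * L x z)"
definition fs :: "('a \<Rightarrow> int) \<Rightarrow> bool" where "fs u \<longleftrightarrow> finite (supp u)"
definition conv :: "('a \<Rightarrow> 'a \<Rightarrow> 'a) \<Rightarrow> ('a \<Rightarrow> int) \<Rightarrow> ('a \<Rightarrow> int) \<Rightarrow> ('a \<Rightarrow> int)" where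
  "conv op u v = lin (\<lambda>x. lin (\<lambda>y. gb (op x y)) v) u"
definition mf :: "'a multiset \<Rightarrow> 'a \<Rightarrow> int" where "mf M = (\<lambda>z. int (count M z))"
definition goodP :: "(('a \<Rightarrow> int) \<Rightarrow> bool) \<Rightarrow> bool" where
  "goodP P \<longleftrightarrow> P 0 \<and> (\<forall>u v. P u \<longrightarrow> P v \<longrightarrow> P (u + v)) \<and> (\<forall>u c. P u \<longrightarrow> P (sc c u))"
definition addi :: "(('a \<Rightarrow> int) \<Rightarrow> bool) \<Rightarrow> (('a \<Rightarrow> int) \<Rightarrow> 'c::ab_group_add) \<Rightarrow> bool" where
  "addi P T \<longleftrightarrow> (\<forall>u v. P u \<longrightarrow> P v \<longrightarrow> T (u + v) = T u + T v)"

lemma sum_fun_apply: "(sum f S) z = (\<Sum>i\<in>S. f i z)"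
  by (induct S rule: infinite_finite_induct) auto

lemma sum_mset_fun_apply: "(sum_mset M) z = sum_mset (image_mset (\<lambda>f. f z) M)"
  by (induct M) auto

lemma scal_sc: "scal = sc"
  by (auto simp: scal_def sc_def fun_eq_iff)

lemma bas_gb: "bas = gb"
  by (auto simp: bas_def gb_def fun_eq_iff)

lemma supp_gb[simp]: "supp (gb x) = {x}"
  by (auto simp: supp_def gb_def)

lemma fs_gb[simp]: "fs (gb x)"
  by (simp add: fs_def)

lemma zero_notin_supp: "x \<notin> supp u \<Longrightarrow> u x = 0"
  by (simp add: supp_def)

lemma supp_add: "supp (u + v) \<subseteq> supp u \<union> supp v"
  by (auto simp: supp_def)

lemma supp_sc: "supp (sc c u) \<subseteq> supp u"
  by (auto simp: supp_def sc_def)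

lemma supp_zero[simp]: "supp 0 = {}"
  by (auto simp: supp_def)

lemma fs_add[intro]: "fs u \<Longrightarrow> fs v \<Longrightarrow> fs (u + v)"
  unfolding fs_def by (rule finite_subset[OF supp_add]) auto

lemma fs_sc[intro]: "fs u \<Longrightarrow> fs (sc c u)"
  unfolding fs_def by (rule finite_subset[OF supp_sc])

lemma fs_zero[simp]: "fs 0"
  by (simp add: fs_def)

lemma goodP_fs: "goodP fs"
  by (auto simp: goodP_def)

lemma sc_zero[simp]: "sc c 0 = 0" "sc 0 u = 0"
  by (auto simp: sc_def fun_eq_iff)

lemma lin_ext:
  assumes "finite A" "supp u \<subseteq> A"
  shows "lin L u = (\<lambda>z. \<Sum>x\<in>A. u x * L x z)"
  unfolding lin_def
  by (rule ext, rule sum.mono_neutral_left) (use assms in \<open>auto simp: supp_def\<close>)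

lemma lin_add:
  assumes "fs u" "fs v"
  shows "lin L (u + v) = lin L u + lin L v"
proof -
  let ?A = "supp u \<union> supp v"
  have f: "finite ?A" using assms by (auto simp: fs_def)
  have "lin L (u + v) = (\<lambda>z. \<Sum>x\<in>?A. (u+v) x * L x z)"
    by (rule lin_ext[OF f supp_add])
  moreover have "lin L u = (\<lambda>z. \<Sum>x\<in>?A. u x * L x z)"
    by (rule lin_ext[OF f]) auto
  moreover have "lin L v = (\<lambda>z. \<Sum>x\<in>?A. v x * L x z)"
    by (rule lin_ext[OF f]) auto
  ultimately show ?thesis
    by (auto simp: fun_eq_iff distrib_right sum.distrib)
qed

lemma lin_zero[simp]: "lin L 0 = 0"
  by (auto simp: lin_def fun_eq_iff)

lemma lin_sc: "lin L (sc c u) = sc c (lin L u)"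
proof (cases "c = 0")
  case True then show ?thesis by simp
next
  case False
  then have "supp (sc c u) = supp u" by (auto simp: supp_def sc_def)
  then show ?thesis
    by (auto simp: lin_def sc_def fun_eq_iff sum_distrib_left mult.assoc)
qed

lemma lin_gb[simp]: "lin L (gb x) = L x"
  by (simp add: lin_def) (simp add: gb_def)

lemma lin_cong: "(\<And>x. x \<in> supp u \<Longrightarrow> L x = L' x) \<Longrightarrow> lin L u = lin L' u"
  by (auto simp: lin_def fun_eq_iff intro!: sum.cong)

lemma lin_plusL: "lin (\<lambda>x. L1 x + L2 x) u = lin L1 u + lin L2 u"
  by (auto simp: lin_def fun_eq_iff distrib_left sum.distrib)

lemma lin_zeroL[simp]: "lin (\<lambda>x. 0) u = 0"
  by (auto simp: lin_def fun_eq_iff)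

lemma lin_sumL: "lin (\<lambda>x. \<Sum>i\<in>I. L i x) u = (\<Sum>i\<in>I. lin (L i) u)"
  by (auto simp: lin_def fun_eq_iff sum_fun_apply sum_distrib_left intro: sum.swap)

lemma supp_lin: "supp (lin L u) \<subseteq> (\<Union>x\<in>supp u. supp (L x))"
proof
  fix z assume "z \<in> supp (lin L u)"
  then have "(\<Sum>x\<in>supp u. u x * L x z) \<noteq> 0" by (simp add: supp_def lin_def)
  then have "\<exists>x\<in>supp u. u x * L x z \<noteq> 0"
    using sum.neutral[of "supp u" "\<lambda>x. u x * L x z"] by blast
  then obtain x where "x \<in> supp u" "u x * L x z \<noteq> 0" by blast
  then show "z \<in> (\<Union>x\<in>supp u. supp (L x))" by (auto simp: supp_def)
qed

lemma fs_lin[intro]: "fs u \<Longrightarrow> (\<And>x. x \<in> supp u \<Longrightarrow> fs (L x)) \<Longrightarrow> fs (lin L u)"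
  unfolding fs_def by (rule finite_subset[OF supp_lin]) auto

lemma lin_gb_id: "fs u \<Longrightarrow> lin gb u = u"
proof (rule ext)
  fix z assume f: "fs u"
  have "lin gb u z = (\<Sum>x\<in>supp u. if x = z then u x else 0)"
    unfolding lin_def gb_def by (rule sum.cong) auto
  also have "\<dots> = u z" using f by (simp add: fs_def supp_def)
  finally show "lin gb u z = u z" .
qed

lemma lin_as_sum: "lin L u = (\<Sum>x\<in>supp u. sc (u x) (L x))"
  by (auto simp: lin_def sc_def fun_eq_iff sum_fun_apply)

lemma addiD: "addi P T \<Longrightarrow> P u \<Longrightarrow> P v \<Longrightarrow> T (u + v) = T u + T v"
  unfolding addi_def by blast

lemma addi_zero: "goodP P \<Longrightarrow> addi P T \<Longrightarrow> T 0 = 0"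
proof -
  assume "goodP P" "addi P T"
  then have "T (0 + 0) = T 0 + T 0" unfolding goodP_def addi_def by blast
  then show "T 0 = 0" by simp
qed

lemma sc_Suc: "sc (int (Suc k)) u = sc (int k) u + u"
  by (auto simp: sc_def fun_eq_iff algebra_simps)

lemma sc_neg: "sc (- c) u + sc c u = 0"
  by (auto simp: sc_def fun_eq_iff algebra_simps)

lemma addi_sc_int:
  fixes T :: "('a \<Rightarrow> int) \<Rightarrow> int"
  assumes g: "goodP P" and a: "addi P T" and u: "P u"
  shows "T (sc c u) = c * T u"
proof -
  have P: "P (sc d u)" for d using g u by (auto simp: goodP_def)
  have nat: "T (sc (int k) u) = int k * T u" for k
  proof (induct k)
    case 0
    have "sc (int 0) u = 0" by (simp only: of_nat_0 sc_zero)
    then show ?case using addi_zero[OF g a] by (simp only: of_nat_0 mult_zero_left)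
  next
    case (Suc k)
    have "T (sc (int (Suc k)) u) = T (sc (int k) u + u)" by (simp only: sc_Suc)
    also have "\<dots> = T (sc (int k) u) + T u"
      using a P u by (simp add: addi_def)
    finally have "T (sc (int (Suc k)) u) = T (sc (int k) u) + T u" .
    then show ?case using Suc by (simp add: algebra_simps)
  qed
  show ?thesis
  proof (cases "c \<ge> 0")
    case True then show ?thesis using nat[of "nat c"] by simp
  next
    case False
    define k where "k = nat (- c)"
    have k: "c = - int k" using False by (simp add: k_def)
    have "T (sc c u) + T (sc (int k) u) = T (sc c u + sc (int k) u)"
      by (rule addiD[OF a P P, symmetric])
    also have "\<dots> = 0" using sc_neg[of "int k" u] k addi_zero[OF g a] by (simp only:)
    finally have "T (sc c u) + T (sc (int k) u) = 0" .
    then show ?thesis using nat[of k] k by simp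
  qed
qed

lemma addi_fun_pt:
  fixes T :: "('a \<Rightarrow> int) \<Rightarrow> ('b \<Rightarrow> int)"
  shows "addi P T \<Longrightarrow> addi P (\<lambda>u. T u z)"
  by (simp add: addi_def)

lemma addi_sc:
  fixes T :: "('a \<Rightarrow> int) \<Rightarrow> ('b \<Rightarrow> int)"
  assumes g: "goodP P" and a: "addi P T" and u: "P u"
  shows "T (sc c u) = sc c (T u)"
  using addi_sc_int[OF g addi_fun_pt[OF a] u] by (auto simp: sc_def fun_eq_iff)

lemma addi_sum:
  assumes g: "goodP P" and a: "addi P T" and u: "\<forall>i\<in>I. P (u i)"
  shows "T (sum u I) = (\<Sum>i\<in>I. T (u i))"
  using u
proof (induct I rule: infinite_finite_induct)
  case (infinite A)
  then have "sum u A = 0" "(\<Sum>i\<in>A. T (u i)) = 0" by (simp_all only: sum.infinite not_False_eq_True)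
  then show ?case using addi_zero[OF g a] by (simp only:)
next
  case empty
  have "sum u {} = 0" "(\<Sum>i\<in>{}. T (u i)) = 0" by (simp_all only: sum.empty)
  then show ?case using addi_zero[OF g a] by (simp only:)
next
  case (insert x F)
  have "P (sum u F)"
    using insert(1,4) g by (induct F rule: finite_induct) (auto simp: goodP_def)
  have "T (sum u (insert x F)) = T (u x + sum u F)" by (simp only: sum.insert[OF insert(1,2)])
  also have "\<dots> = T (u x) + T (sum u F)" by (rule addiD[OF a]) (use insert \<open>P (sum u F)\<close> in auto)
  finally have c: "T (sum u (insert x F)) = T (u x) + T (sum u F)" .
  have IH: "T (sum u F) = (\<Sum>i\<in>F. T (u i))" using insert by blast
  show ?case using c IH sum.insert[OF insert(1,2), of "\<lambda>i. T (u i)"] by (simp only:)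
qed

lemma addi_lin:
  fixes T :: "('a \<Rightarrow> int) \<Rightarrow> ('b \<Rightarrow> int)"
  assumes g: "goodP P" and a: "addi P T" and L: "\<And>x. x \<in> supp u \<Longrightarrow> P (L x)"
  shows "T (lin L u) = lin (\<lambda>x. T (L x)) u"
proof (cases "fs u")
  case True
  have "T (lin L u) = T (\<Sum>x\<in>supp u. sc (u x) (L x))" by (simp add: lin_as_sum)
  also have "\<dots> = (\<Sum>x\<in>supp u. T (sc (u x) (L x)))"
    by (rule addi_sum[OF g a]) (use g L in \<open>auto simp: goodP_def\<close>)
  also have "\<dots> = (\<Sum>x\<in>supp u. sc (u x) (T (L x)))"
    by (rule sum.cong) (auto intro: addi_sc[OF g a L])
  finally show ?thesis by (simp add: lin_as_sum)
next
  case False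
  then show ?thesis using addi_zero[OF g a] by (simp add: lin_def fs_def fun_eq_iff zero_fun_def)
qed

lemma addi_lin_fs: "addi fs (lin L)"
  by (simp add: addi_def lin_add)

lemma lin_swap: "lin (\<lambda>y. lin (\<lambda>z. K y z) c) b = lin (\<lambda>z. lin (\<lambda>y. K y z) b) c"
  by (auto simp: lin_def fun_eq_iff sum_distrib_left mult.left_commute intro: sum.swap)

lemma addi_conv_left: "addi fs (\<lambda>u. conv op u v)"
  unfolding conv_def by (rule addi_lin_fs)

lemma addi_conv_right: "addi fs (conv op u)"
  unfolding addi_def conv_def
  by (auto simp: lin_add lin_plusL[symmetric] intro!: lin_cong)

lemma fs_conv[intro]: "fs u \<Longrightarrow> fs v \<Longrightarrow> fs (conv op u v)"
  unfolding conv_def by (intro fs_lin) auto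

lemma conv_gb_left: "conv op (gb a) v = lin (\<lambda>y. gb (op a y)) v"
  by (simp add: conv_def)

lemma conv_lin_left:
  assumes "\<And>x. x \<in> supp u \<Longrightarrow> fs (L x)"
  shows "conv op (lin L u) v = lin (\<lambda>x. conv op (L x) v) u"
  using addi_lin[OF goodP_fs addi_conv_left, of u L op v] assms by simp

lemma conv_lin_right:
  assumes "\<And>x. x \<in> supp v \<Longrightarrow> fs (L x)"
  shows "conv op u (lin L v) = lin (\<lambda>x. conv op u (L x)) v"
  using addi_lin[OF goodP_fs addi_conv_right, of v L op u] assms by simp

lemma lin_lin:
  assumes "\<And>x. x \<in> supp u \<Longrightarrow> fs (L x)"
  shows "lin K (lin L u) = lin (\<lambda>x. lin K (L x)) u"
  using addi_lin[OF goodP_fs addi_lin_fs, of u L K] assms by simp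

lemma conv_gb_gb: "conv op (gb a) (gb b) = gb (op a b)"
  by (simp add: conv_def)

lemma conv_assoc:
  assumes op: "\<And>x y z. op (op x y) z = op x (op y z)"
    and u: "fs u" and v: "fs v" and w: "fs w"
  shows "conv op (conv op u v) w = conv op u (conv op v w)"
proof -
  have "conv op (conv op u v) w = lin (\<lambda>x. conv op (lin (\<lambda>y. gb (op x y)) v) w) u"
    unfolding conv_def[of op u v] by (rule conv_lin_left) (use v in auto)
  also have "\<dots> = lin (\<lambda>x. lin (\<lambda>y. lin (\<lambda>z. gb (op (op x y) z)) w) v) u"
    by (rule lin_cong, subst conv_lin_left) (auto simp: conv_gb_left)
  finally have L: "conv op (conv op u v) w = lin (\<lambda>x. lin (\<lambda>y. lin (\<lambda>z. gb (op (op x y) z)) w) v) u" .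
  have "conv op u (conv op v w) = lin (\<lambda>x. lin (\<lambda>y'. gb (op x y')) (lin (\<lambda>y. lin (\<lambda>z. gb (op y z)) w) v)) u"
    by (simp add: conv_def)
  also have "\<dots> = lin (\<lambda>x. lin (\<lambda>y. lin (\<lambda>z. gb (op x (op y z))) w) v) u"
    by (rule lin_cong, subst lin_lin) (use w in \<open>auto intro!: lin_cong simp: lin_lin\<close>)
  finally show ?thesis using L op by simp
qed

lemma conv_unit_left:
  assumes "\<And>z. op e z = z" "fs v"
  shows "conv op (gb e) v = v"
  using assms by (simp add: conv_gb_left lin_gb_id)

lemma conv_unit_right:
  assumes "\<And>z. op z e = z" "fs u"
  shows "conv op u (gb e) = u"
  using assms by (simp add: conv_def lin_gb_id)

lemma conv_hom_left:
  assumes Z: "\<And>q r. Z (op q r) = op (Z q) r" and U: "fs U" and V: "fs V"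
  shows "lin (\<lambda>q. gb (Z q)) (conv op U V) = conv op (lin (\<lambda>q. gb (Z q)) U) V"
proof -
  have "lin (\<lambda>q. gb (Z q)) (conv op U V) = lin (\<lambda>x. lin (\<lambda>y. gb (Z (op x y))) V) U"
    unfolding conv_def using V by (subst lin_lin) (auto intro!: lin_cong simp: lin_lin)
  also have "\<dots> = conv op (lin (\<lambda>q. gb (Z q)) U) V"
    by (subst conv_lin_left) (auto simp: conv_gb_left Z)
  finally show ?thesis .
qed

lemma conv_sum_left:
  assumes "\<And>i. i \<in> I \<Longrightarrow> fs (F i)"
  shows "conv op (sum F I) v = (\<Sum>i\<in>I. conv op (F i) v)"
  using addi_sum[OF goodP_fs addi_conv_left, of I F op v] assms by simp

lemma conv_sum_right:
  assumes "\<And>i. i \<in> I \<Longrightarrow> fs (F i)"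
  shows "conv op u (sum F I) = (\<Sum>i\<in>I. conv op u (F i))"
  using addi_sum[OF goodP_fs addi_conv_right, of I F op u] assms by simp

lemma lin_sum_arg:
  assumes "\<And>i. i \<in> I \<Longrightarrow> fs (F i)"
  shows "lin L (sum F I) = (\<Sum>i\<in>I. lin L (F i))"
  using addi_sum[OF goodP_fs addi_lin_fs, of I F L] assms by simp

lemma fs_sum[intro]: "(\<And>i. i \<in> I \<Longrightarrow> fs (F i)) \<Longrightarrow> fs (sum F I)"
  by (induct I rule: infinite_finite_induct) auto

lemma supp_mf[simp]: "supp (mf M) = set_mset M"
  by (auto simp: supp_def mf_def)

lemma fs_mf[simp]: "fs (mf M)"
  by (simp add: fs_def)

lemma mf_empty[simp]: "mf {#} = 0"
  by (auto simp: mf_def fun_eq_iff)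

lemma mf_add: "mf (M + N) = mf M + mf N"
  by (auto simp: mf_def fun_eq_iff)

lemma mf_add_mset: "mf (add_mset a M) = gb a + mf M"
  by (auto simp: mf_def gb_def fun_eq_iff)

lemma mf_single: "mf {#a#} = gb a"
  by (auto simp: mf_def gb_def fun_eq_iff)

lemma mf_sum: "mf (sum F I) = (\<Sum>i\<in>I. mf (F i))"
  by (induct I rule: infinite_finite_induct) (auto simp: mf_add)

lemma mf_image: "mf (image_mset g M) = lin (\<lambda>q. gb (g q)) (mf M)"
proof (induct M)
  case empty then show ?case by (simp only: image_mset_empty mf_empty lin_zero)
next
  case (add x M)
  have "mf (image_mset g (add_mset x M)) = gb (g x) + mf (image_mset g M)" by (simp add: mf_add_mset)
  also have "\<dots> = lin (\<lambda>q. gb (g q)) (gb x) + lin (\<lambda>q. gb (g q)) (mf M)" by (simp only: add lin_gb)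
  also have "\<dots> = lin (\<lambda>q. gb (g q)) (gb x + mf M)" by (rule lin_add[symmetric]) auto
  also have "\<dots> = lin (\<lambda>q. gb (g q)) (mf (add_mset x M))" by (simp only: mf_add_mset)
  finally show ?case .
qed

lemma lin_mf: "lin L (mf M) = sum_mset (image_mset L M)"
proof (induct M)
  case empty then show ?case by (simp only: image_mset_empty mf_empty lin_zero sum_mset.empty)
next
  case (add x M)
  have "lin L (mf (add_mset x M)) = lin L (gb x + mf M)" by (simp only: mf_add_mset)
  also have "\<dots> = lin L (gb x) + lin L (mf M)" by (rule lin_add) auto
  also have "\<dots> = sum_mset (image_mset L (add_mset x M))" by (simp only: add lin_gb) simp
  finally show ?case .
qed

subsection \<open>tensors\<close>

lemma tens_lin:
  fixes a b :: "nat list \<Rightarrow> int"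
  assumes "fs a" "fs b"
  shows "tens a b = lin (\<lambda>x. lin (\<lambda>y. gb (x, y)) b) a"
proof (rule ext, clarify)
  fix p q :: "nat list"
  have i: "lin (\<lambda>y. gb (x, y)) b (p, q) = (if x = p then b q else 0)" for x
  proof -
    have "lin (\<lambda>y. gb (x, y)) b (p, q) = (\<Sum>y\<in>supp b. if y = q then (if x = p then b y else 0) else 0)"
      unfolding lin_def gb_def by (rule sum.cong) auto
    also have "\<dots> = (if x = p then b q else 0)" using assms by (auto simp: fs_def supp_def)
    finally show ?thesis .
  qed
  have "lin (\<lambda>x. lin (\<lambda>y. gb (x, y)) b) a (p, q) = (\<Sum>x\<in>supp a. if x = p then a x * b q else 0)"
    unfolding lin_def[of _ a] i by (rule sum.cong) auto
  also have "\<dots> = a p * b q" using assms by (auto simp: fs_def supp_def)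
  finally show "tens a b (p, q) = lin (\<lambda>x. lin (\<lambda>y. gb (x, y)) b) a (p, q)"
    by (simp add: tens_def)
qed

lemma tens_gb: "tens (gb x) (gb y) = gb (x, y)"
  by (auto simp: tens_def gb_def fun_eq_iff)

lemma fs_tens[intro]: "fs a \<Longrightarrow> fs b \<Longrightarrow> fs (tens a b)"
  by (simp add: tens_lin fs_lin)

lemma addi_tens_left: "addi fs (\<lambda>a. tens a b)"
  by (auto simp: addi_def tens_def fun_eq_iff distrib_right)

lemma addi_tens_right: "addi fs (tens a)"
  by (auto simp: addi_def tens_def fun_eq_iff distrib_left)

definition cat2 :: "nat list \<times> nat list \<Rightarrow> nat list \<times> nat list \<Rightarrow> nat list \<times> nat list" where
  "cat2 q r = (fst q @ fst r, snd q @ snd r)"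

lemma conv_tens:
  assumes a: "fs a" and b: "fs b" and c: "fs c" and d: "fs d"
  shows "conv cat2 (tens a b) (tens c d) = tens (conv (@) a c) (conv (@) b d)"
proof -
  have L: "conv cat2 (tens a b) (tens c d) =
     lin (\<lambda>x. lin (\<lambda>y. lin (\<lambda>z. lin (\<lambda>w. gb (x @ z, y @ w)) d) c) b) a"
    unfolding tens_lin[OF a b]
    apply (subst conv_lin_left)
    using b apply (intro fs_lin; simp)
    apply (rule lin_cong)
    apply (subst conv_lin_left, simp)
    apply (rule lin_cong)
    apply (simp add: conv_gb_left tens_lin[OF c d])
    apply (subst lin_lin)
    using d apply (intro fs_lin; simp)
    apply (rule lin_cong)
    apply (subst lin_lin, simp)
    apply (simp add: cat2_def)
    done
  have R: "tens (conv (@) a c) (conv (@) b d) =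
     lin (\<lambda>x. lin (\<lambda>z. lin (\<lambda>y. lin (\<lambda>w. gb (x @ z, y @ w)) d) b) c) a"
    unfolding conv_def[of _ a c]
    apply (subst addi_lin[OF goodP_fs addi_tens_left])
    using c apply (intro fs_lin; simp)
    apply (rule lin_cong)
    apply (subst addi_lin[OF goodP_fs addi_tens_left], simp)
    apply (rule lin_cong)
    apply (unfold conv_def[of _ b d])
    apply (subst addi_lin[OF goodP_fs addi_tens_right])
    using d apply (intro fs_lin; simp)
    apply (rule lin_cong)
    apply (subst addi_lin[OF goodP_fs addi_tens_right], simp)
    apply (simp add: tens_gb)
    done
  show ?thesis unfolding L R
    by (rule lin_cong) (rule lin_swap)
qed

lemma one_z_gb: "one_z = gb []"
  by (simp add: one_z_def bas_gb)

lemma ns_mult_conv: "ns_mult = conv (@)"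
proof (intro ext)
  fix f g :: "nat list \<Rightarrow> int" and z
  show "ns_mult f g z = conv (@) f g z"
    unfolding ns_mult_def conv_def lin_def gb_def
    by (auto simp: sum_distrib_left mult.assoc intro!: sum.cong)
qed

definition CC :: "nat list \<Rightarrow> nat list \<times> nat list \<Rightarrow> int" where
  "CC \<alpha> = mf (cop \<alpha>)"

lemma coprod_lin: "coprod = lin CC"
  by (auto simp: coprod_def lin_def CC_def mf_def fun_eq_iff)

lemma fs_CC[simp]: "fs (CC \<alpha>)" by (simp add: CC_def)

lemma tens_map_lin: "tens_map h T = lin (\<lambda>q. tens (h (gb (fst q))) (h (gb (snd q)))) T"
  by (auto simp: tens_map_def lin_def fun_eq_iff sum_fun_apply bas_gb)

definition Zi :: "nat \<Rightarrow> nat \<Rightarrow> nat list \<times> nat list \<Rightarrow> nat list \<times> nat list" where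
  "Zi a i q = (zc i (fst q), zc (a - i) (snd q))"

lemma cop_Cons: "cop (a # \<alpha>) = (\<Sum>i\<in>{0..a}. image_mset (Zi a i) (cop \<alpha>))"
proof -
  have "(\<lambda>(\<beta>, \<gamma>). (zc i \<beta>, zc (a - i) \<gamma>)) = Zi a i" for i
    by (auto simp: Zi_def fun_eq_iff)
  then show ?thesis by simp
qed

lemma CC_Cons: "CC (a # \<alpha>) = (\<Sum>i\<in>{0..a}. lin (\<lambda>q. gb (Zi a i q)) (CC \<alpha>))"
  unfolding CC_def cop_Cons mf_sum mf_image ..

lemma zc_append: "zc i (u @ v) = zc i u @ v"
  by (simp add: zc_def)

lemma Zi_cat2: "Zi a i (cat2 q r) = cat2 (Zi a i q) r"
  by (simp add: Zi_def cat2_def zc_append)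

lemma CC_append: "CC (x @ y) = conv cat2 (CC x) (CC y)"
proof (induct x)
  case Nil
  have "CC [] = gb ([], [])" by (simp add: CC_def mf_single)
  then show ?case
    by (simp add: conv_unit_left cat2_def)
next
  case (Cons a x)
  have "CC ((a # x) @ y) = (\<Sum>i\<in>{0..a}. lin (\<lambda>q. gb (Zi a i q)) (conv cat2 (CC x) (CC y)))"
    by (simp add: CC_Cons Cons)
  also have "\<dots> = (\<Sum>i\<in>{0..a}. conv cat2 (lin (\<lambda>q. gb (Zi a i q)) (CC x)) (CC y))"
    by (rule sum.cong[OF refl], rule conv_hom_left) (auto simp: Zi_cat2)
  also have "\<dots> = conv cat2 (CC (a # x)) (CC y)"
    by (simp add: CC_Cons conv_sum_left fs_lin)
  finally show ?case .
qed

lemma coprod_mult: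
  assumes u: "fs u" and v: "fs v"
  shows "coprod (conv (@) u v) = conv cat2 (coprod u) (coprod v)"
proof -
  have "coprod (conv (@) u v) = lin (\<lambda>x. lin (\<lambda>y. CC (x @ y)) v) u"
    unfolding coprod_lin conv_def using v
    by (subst lin_lin) (auto intro!: lin_cong simp: lin_lin)
  also have "\<dots> = lin (\<lambda>x. lin (\<lambda>y. conv cat2 (CC x) (CC y)) v) u"
    by (simp add: CC_append)
  also have "\<dots> = conv cat2 (coprod u) (coprod v)"
    unfolding coprod_lin
    by (subst conv_lin_left) (auto intro!: lin_cong simp: conv_lin_right)
  finally show ?thesis .
qed

lemma zcomp_iff: "u \<in> zcomp \<longleftrightarrow> fs u \<and> (\<forall>\<alpha>\<in>supp u. is_comp \<alpha>)"
  by (simp add: zcomp_def fs_def)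

lemma zcomp_fs: "u \<in> zcomp \<Longrightarrow> fs u"
  by (simp add: zcomp_iff)

lemma goodP_zcomp: "goodP (\<lambda>u. u \<in> zcomp)"
  unfolding goodP_def zcomp_iff
proof (intro conjI allI impI)
  fix u v :: "nat list \<Rightarrow> int" and c
  show "fs (0::nat list \<Rightarrow> int)" "\<forall>a\<in>supp (0::nat list \<Rightarrow> int). is_comp a" by auto
  assume u: "fs u \<and> (\<forall>a\<in>supp u. is_comp a)"
  then show "fs (sc c u)" "\<forall>a\<in>supp (sc c u). is_comp a" using supp_sc[of c u] by auto
  assume v: "fs v \<and> (\<forall>a\<in>supp v. is_comp a)"
  then show "fs (u + v)" "\<forall>a\<in>supp (u + v). is_comp a" using u supp_add[of u v] by auto
qed

lemma gb_zcomp[simp]: "gb \<alpha> \<in> zcomp \<longleftrightarrow> is_comp \<alpha>"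
  by (simp add: zcomp_iff)

lemma is_comp_simps[simp]: "is_comp []" "is_comp (a # \<alpha>) \<longleftrightarrow> 0 < a \<and> is_comp \<alpha>"
  "is_comp (\<alpha> @ \<beta>) \<longleftrightarrow> is_comp \<alpha> \<and> is_comp \<beta>"
  by (auto simp: is_comp_def)

lemma lin_zcomp:
  assumes "fs x" "\<And>\<alpha>. \<alpha> \<in> supp x \<Longrightarrow> L \<alpha> \<in> zcomp"
  shows "lin L x \<in> zcomp"
proof -
  have "fs (lin L x)" using assms zcomp_fs by (intro fs_lin) auto
  moreover have "\<forall>\<alpha>\<in>supp (lin L x). is_comp \<alpha>"
    using supp_lin[of L x] assms by (auto simp: zcomp_iff)
  ultimately show ?thesis by (simp add: zcomp_iff)
qed

lemma conv_zcomp: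
  assumes "u \<in> zcomp" "v \<in> zcomp"
  shows "conv (@) u v \<in> zcomp"
  unfolding conv_def using assms
  by (intro lin_zcomp) (auto simp: zcomp_iff intro!: lin_zcomp)

lemma conv_nil:
  assumes "fs u" "fs v"
  shows "conv (@) u v [] = u [] * v []"
proof -
  have i: "lin (\<lambda>y. gb (x @ y)) v [] = (if x = [] then v [] else 0)" for x
  proof -
    have "lin (\<lambda>y. gb (x @ y)) v [] = (\<Sum>y\<in>supp v. if y = [] then (if x = [] then v y else 0) else 0)"
      unfolding lin_def gb_def by (rule sum.cong) auto
    also have "\<dots> = (if x = [] then v [] else 0)" using assms by (auto simp: fs_def supp_def)
    finally show ?thesis .
  qed
  have "conv (@) u v [] = (\<Sum>x\<in>supp u. if x = [] then u x * v [] else 0)"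
    unfolding conv_def lin_def[of _ u] i by (rule sum.cong) auto
  also have "\<dots> = u [] * v []" using assms by (auto simp: fs_def supp_def)
  finally show ?thesis .
qed

lemma lin_nil:
  assumes "fs x" "\<And>\<alpha>. \<alpha> \<in> supp x \<Longrightarrow> L \<alpha> [] = (if \<alpha> = [] then 1 else 0)"
  shows "lin L x [] = x []"
proof -
  have "lin L x [] = (\<Sum>\<alpha>\<in>supp x. if \<alpha> = [] then x \<alpha> else 0)"
    unfolding lin_def using assms(2) by (intro sum.cong) auto
  also have "\<dots> = x []" using assms by (auto simp: fs_def supp_def)
  finally show ?thesis .
qed

locale dps =
  fixes D :: "nat \<Rightarrow> nat list \<Rightarrow> int"
  assumes D_zcomp: "\<And>k. D k \<in> zcomp"
    and D_0: "D 0 = gb []"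
    and D_cop: "\<And>k. coprod (D k) = (\<Sum>i\<in>{0..k}. tens (D i) (D (k - i)))"
    and D_nil: "\<And>k. 0 < k \<Longrightarrow> D k [] = 0"
begin

definition FF :: "nat list \<Rightarrow> nat list \<Rightarrow> int" where
  "FF \<alpha> = foldr (\<lambda>a acc. conv (@) (D a) acc) \<alpha> (gb [])"

lemma FF_simps[simp]: "FF [] = gb []" "FF (a # \<alpha>) = conv (@) (D a) (FF \<alpha>)"
  by (simp_all add: FF_def)

lemma FF_zcomp[simp]: "FF \<alpha> \<in> zcomp"
  by (induct \<alpha>) (auto intro: conv_zcomp D_zcomp)

lemma fs_FF[simp]: "fs (FF \<alpha>)"
  by (rule zcomp_fs[OF FF_zcomp])

lemma fs_D[simp]: "fs (D k)"
  by (rule zcomp_fs[OF D_zcomp])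

lemma FF_zc: "FF (zc i \<beta>) = conv (@) (D i) (FF \<beta>)"
  by (cases "i = 0") (auto simp: zc_def D_0 conv_unit_left)

lemma FF_append: "FF (\<alpha> @ \<beta>) = conv (@) (FF \<alpha>) (FF \<beta>)"
  by (induct \<alpha>) (auto simp: conv_unit_left conv_assoc)

lemma FF_nil: "is_comp \<alpha> \<Longrightarrow> FF \<alpha> [] = (if \<alpha> = [] then 1 else 0)"
  by (induct \<alpha>) (auto simp: conv_nil D_nil gb_def)

definition ff :: "(nat list \<Rightarrow> int) \<Rightarrow> nat list \<Rightarrow> int" where
  "ff x = lin FF x"

definition Tf :: "nat list \<times> nat list \<Rightarrow> nat list \<times> nat list \<Rightarrow> int" where
  "Tf q = tens (FF (fst q)) (FF (snd q))"

lemma key: "coprod (FF \<alpha>) = lin Tf (CC \<alpha>)"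
proof (induct \<alpha>)
  case Nil
  have "CC [] = gb ([], [])" by (simp add: CC_def mf_single)
  then show ?case by (simp add: coprod_lin Tf_def tens_gb)
next
  case (Cons a \<alpha>)
  have "coprod (FF (a # \<alpha>)) = conv cat2 (coprod (D a)) (coprod (FF \<alpha>))"
    by (simp add: coprod_mult)
  also have "\<dots> = conv cat2 (\<Sum>i\<in>{0..a}. tens (D i) (D (a - i))) (lin Tf (CC \<alpha>))"
    by (simp add: D_cop Cons)
  also have "\<dots> = (\<Sum>i\<in>{0..a}. conv cat2 (tens (D i) (D (a - i))) (lin Tf (CC \<alpha>)))"
    by (rule conv_sum_left) auto
  also have "\<dots> = (\<Sum>i\<in>{0..a}. lin (\<lambda>q. conv cat2 (tens (D i) (D (a - i))) (Tf q)) (CC \<alpha>))"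
    by (rule sum.cong[OF refl], rule conv_lin_right) (auto simp: Tf_def)
  also have "\<dots> = (\<Sum>i\<in>{0..a}. lin (\<lambda>q. Tf (Zi a i q)) (CC \<alpha>))"
    by (rule sum.cong[OF refl], rule lin_cong) (simp add: Tf_def conv_tens Zi_def FF_zc)
  also have "\<dots> = (\<Sum>i\<in>{0..a}. lin Tf (lin (\<lambda>q. gb (Zi a i q)) (CC \<alpha>)))"
    by (rule sum.cong[OF refl]) (simp add: lin_lin)
  also have "\<dots> = lin Tf (CC (a # \<alpha>))"
    by (simp add: CC_Cons lin_sum_arg fs_lin)
  finally show ?case .
qed

lemma ff_gb[simp]: "ff (gb \<alpha>) = FF \<alpha>"
  by (simp add: ff_def)

lemma hopf: "ns_hopf_endo ff"
  unfolding ns_hopf_endo_def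
proof (intro conjI ballI)
  fix x assume x: "x \<in> zcomp"
  show "ff x \<in> zcomp" unfolding ff_def by (rule lin_zcomp) (use x zcomp_fs in auto)
next
  show "ff one_z = one_z" by (simp add: one_z_gb)
next
  fix x y assume x: "x \<in> zcomp" and y: "y \<in> zcomp"
  show "ff (x + y) = ff x + ff y" using x y by (simp add: ff_def lin_add zcomp_fs)
  have "ff (conv (@) x y) = lin (\<lambda>a. lin (\<lambda>b. FF (a @ b)) y) x"
    unfolding ff_def conv_def using y zcomp_fs
    by (subst lin_lin) (auto intro!: lin_cong simp: lin_lin)
  also have "\<dots> = conv (@) (ff x) (ff y)"
    unfolding ff_def FF_append
    by (subst conv_lin_left) (auto intro!: lin_cong simp: conv_lin_right)
  finally show "ff (ns_mult x y) = ns_mult (ff x) (ff y)" by (simp add: ns_mult_conv)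
next
  fix x assume x: "x \<in> zcomp"
  show "counit (ff x) = counit x"
    unfolding counit_def ff_def
    by (rule lin_nil) (use x in \<open>auto simp: zcomp_iff FF_nil\<close>)
  have "coprod (ff x) = lin (\<lambda>\<alpha>. coprod (FF \<alpha>)) x"
    unfolding ff_def coprod_lin by (rule lin_lin) simp
  also have "\<dots> = lin (\<lambda>\<alpha>. lin Tf (CC \<alpha>)) x" by (simp add: key)
  also have "\<dots> = tens_map ff (coprod x)"
    unfolding tens_map_lin coprod_lin
    by (subst lin_lin) (auto intro!: lin_cong simp: Tf_def)
  finally show "coprod (ff x) = tens_map ff (coprod x)" .
qed

lemma ff_single: "ff (bas [k]) = D k"
  by (simp add: bas_gb conv_unit_right)

lemma unique:
  assumes g: "ns_hopf_endo g" and gk: "\<forall>k\<ge>1. g (bas [k]) = D k"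
    and x: "x \<in> zcomp"
  shows "g x = ff x"
proof -
  have add: "addi (\<lambda>u. u \<in> zcomp) g"
    using g by (auto simp: ns_hopf_endo_def addi_def)
  have gg: "g (gb \<alpha>) = FF \<alpha>" if "is_comp \<alpha>" for \<alpha>
    using that
  proof (induct \<alpha>)
    case Nil then show ?case using g by (simp add: ns_hopf_endo_def one_z_gb)
  next
    case (Cons a \<alpha>)
    have "gb (a # \<alpha>) = ns_mult (gb [a]) (gb \<alpha>)" by (simp add: ns_mult_conv conv_gb_gb)
    then have "g (gb (a # \<alpha>)) = ns_mult (g (gb [a])) (g (gb \<alpha>))"
      using g Cons(2) by (simp add: ns_hopf_endo_def)
    then show ?case using Cons gk by (simp add: ns_mult_conv bas_gb)
  qed
  have "g x = g (lin gb x)" using x by (simp add: lin_gb_id zcomp_fs)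
  also have "\<dots> = lin (\<lambda>\<alpha>. g (gb \<alpha>)) x"
    by (rule addi_lin[OF goodP_zcomp add]) (use x in \<open>auto simp: zcomp_iff\<close>)
  also have "\<dots> = ff x" unfolding ff_def
    by (rule lin_cong) (use x gg in \<open>auto simp: zcomp_iff\<close>)
  finally show ?thesis .
qed

end

declare cop.simps(2)[simp del]

lemma set_mset_sum: "finite A \<Longrightarrow> set_mset (sum F A) = (\<Union>a\<in>A. set_mset (F a))"
  by (induct A rule: finite_induct) auto

lemma comp_length_le: "is_comp \<alpha> \<Longrightarrow> length \<alpha> \<le> sum_list \<alpha>"
  by (induct \<alpha>) auto

lemma finite_Cw: "finite {\<gamma>. is_comp \<gamma> \<and> sum_list \<gamma> = m}"
proof (rule finite_subset[OF _ finite_lists_length_le[of "{0..m}" m]])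
  show "{\<gamma>. is_comp \<gamma> \<and> sum_list \<gamma> = m} \<subseteq> {xs. set xs \<subseteq> {0..m} \<and> length xs \<le> m}"
    using comp_length_le member_le_sum_list by fastforce
qed simp

subsection \<open>quasi-shuffles\<close>

lemma qsh_props:
  "\<gamma> \<in># qsh \<alpha> \<beta> \<Longrightarrow> sum_list \<gamma> = sum_list \<alpha> + sum_list \<beta> \<and> (is_comp \<alpha> \<longrightarrow> is_comp \<beta> \<longrightarrow> is_comp \<gamma>)"
  by (induct \<alpha> \<beta> arbitrary: \<gamma> rule: qsh.induct) auto

lemma qsh_Nil_right[simp]: "qsh xs [] = {#xs#}"
  by (cases xs) auto

lemma cnt_img_hit: "inj f \<Longrightarrow> count (image_mset f M) (f x) = count M x"
proof -
  assume i: "inj f"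
  have "f -` {f x} \<inter> set_mset M = (if x \<in># M then {x} else {})"
    using i by (auto dest: injD)
  then show ?thesis by (auto simp: count_image_mset not_in_iff)
qed

lemma cnt_img_miss: "(\<And>x. f x \<noteq> y) \<Longrightarrow> count (image_mset f M) y = 0"
  by (auto simp: count_image_mset)

lemma cnt_cons: "count (image_mset ((#) x) M) (a # \<gamma>) = (if x = a then count M \<gamma> else 0)"
proof (cases "x = a")
  case True
  then show ?thesis using cnt_img_hit[of "(#) x" M \<gamma>] by (simp add: inj_def)
next
  case False then show ?thesis by (simp add: cnt_img_miss)
qed

lemma cnt_cons_nil: "count (image_mset ((#) x) M) [] = 0"
  by (simp add: cnt_img_miss)

lemma cnt_qsh_nil: "count (qsh \<alpha> \<beta>) [] = (if \<alpha> = [] \<and> \<beta> = [] then 1 else 0)"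
  by (cases "(\<alpha>, \<beta>)" rule: qsh.cases) (auto simp: cnt_cons_nil)

lemma cop_comp: "q \<in># cop \<gamma> \<Longrightarrow> is_comp (fst q) \<and> is_comp (snd q)"
proof (induct \<gamma> arbitrary: q)
  case Nil then show ?case by simp
next
  case (Cons a \<gamma>)
  then obtain i q' where "q' \<in># cop \<gamma>" "q = Zi a i q'"
    by (auto simp: cop_Cons set_mset_sum)
  then show ?case using Cons(1) by (auto simp: Zi_def zc_def)
qed

lemma inj_zc: "inj (zc i)"
  by (auto simp: inj_def zc_def)

lemma inj_Zi: "inj (Zi a i)"
  using inj_zc by (auto simp: inj_def Zi_def prod_eq_iff)

lemma T0: "0 < a \<Longrightarrow> count (image_mset (Zi a 0) M) (\<alpha>, \<beta>) =
   (case \<beta> of [] \<Rightarrow> 0 | y # ys \<Rightarrow> if y = a then count M (\<alpha>, ys) else 0)"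
proof (cases "\<exists>ys. \<beta> = a # ys")
  case True
  then obtain ys where b: "\<beta> = a # ys" by blast
  assume "0 < a"
  then have "Zi a 0 (\<alpha>, ys) = (\<alpha>, \<beta>)" by (simp add: Zi_def zc_def b)
  then show ?thesis using cnt_img_hit[OF inj_Zi, of a 0 M "(\<alpha>, ys)"] b by simp
next
  case False
  assume a: "0 < a"
  have "Zi a 0 q \<noteq> (\<alpha>, \<beta>)" for q using False a by (auto simp: Zi_def zc_def)
  then show ?thesis using False by (auto simp: cnt_img_miss split: list.split)
qed

lemma Ta: "0 < a \<Longrightarrow> count (image_mset (Zi a a) M) (\<alpha>, \<beta>) =
   (case \<alpha> of [] \<Rightarrow> 0 | x # xs \<Rightarrow> if x = a then count M (xs, \<beta>) else 0)"
proof (cases "\<exists>xs. \<alpha> = a # xs")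
  case True
  then obtain xs where b: "\<alpha> = a # xs" by blast
  assume "0 < a"
  then have "Zi a a (xs, \<beta>) = (\<alpha>, \<beta>)" by (simp add: Zi_def zc_def b)
  then show ?thesis using cnt_img_hit[OF inj_Zi, of a a M "(xs, \<beta>)"] b by simp
next
  case False
  assume a: "0 < a"
  have "Zi a a q \<noteq> (\<alpha>, \<beta>)" for q using False a by (auto simp: Zi_def zc_def)
  then show ?thesis using False by (auto simp: cnt_img_miss split: list.split)
qed

lemma Tm: "0 < i \<Longrightarrow> i < a \<Longrightarrow> count (image_mset (Zi a i) M) (\<alpha>, \<beta>) =
   (case \<alpha> of [] \<Rightarrow> 0 | x # xs \<Rightarrow> (case \<beta> of [] \<Rightarrow> 0 | y # ys \<Rightarrow>
      if x = i \<and> y = a - i then count M (xs, ys) else 0))"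
proof (cases "\<exists>xs ys. \<alpha> = i # xs \<and> \<beta> = (a - i) # ys")
  case True
  then obtain xs ys where b: "\<alpha> = i # xs" "\<beta> = (a - i) # ys" by blast
  assume "0 < i" "i < a"
  then have "Zi a i (xs, ys) = (\<alpha>, \<beta>)" by (simp add: Zi_def zc_def b)
  then show ?thesis using cnt_img_hit[OF inj_Zi, of a i M "(xs, ys)"] b by simp
next
  case False
  assume a: "0 < i" "i < a"
  have "Zi a i q \<noteq> (\<alpha>, \<beta>)" for q using False a by (auto simp: Zi_def zc_def)
  then show ?thesis using False by (auto simp: cnt_img_miss split: list.split)
qed

lemma cop_count_Cons:
  assumes a: "0 < a"
  shows "count (cop (a # \<gamma>)) (\<alpha>, \<beta>) = count (image_mset (Zi a 0) (cop \<gamma>)) (\<alpha>, \<beta>)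
     + count (image_mset (Zi a a) (cop \<gamma>)) (\<alpha>, \<beta>)
     + (\<Sum>i\<in>{1..<a}. count (image_mset (Zi a i) (cop \<gamma>)) (\<alpha>, \<beta>))" (is "_ = ?R")
proof -
  have s: "{0..a} = insert 0 (insert a {1..<a})" using a by auto
  have "count (cop (a # \<gamma>)) (\<alpha>, \<beta>) = (\<Sum>i\<in>{0..a}. count (image_mset (Zi a i) (cop \<gamma>)) (\<alpha>, \<beta>))"
    by (simp only: cop_Cons count_sum)
  also have "\<dots> = ?R"
    unfolding s using a by (simp add: add.assoc)
  finally show ?thesis .
qed

lemma mid:
  assumes a: "0 < a" and c: "is_comp \<alpha>" "is_comp \<beta>"
  shows "(\<Sum>i\<in>{1..<a}. count (image_mset (Zi a i) M) (\<alpha>, \<beta>)) =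
    (case \<alpha> of [] \<Rightarrow> 0 | x # xs \<Rightarrow> (case \<beta> of [] \<Rightarrow> 0 | y # ys \<Rightarrow>
      if x + y = a then count M (xs, ys) else 0))" (is "_ = ?R")
proof -
  have "(\<Sum>i\<in>{1..<a}. count (image_mset (Zi a i) M) (\<alpha>, \<beta>)) =
     (\<Sum>i\<in>{1..<a}. (case \<alpha> of [] \<Rightarrow> 0 | x # xs \<Rightarrow> (case \<beta> of [] \<Rightarrow> 0 | y # ys \<Rightarrow>
      if i = x then (if x + y = a then count M (xs, ys) else 0) else 0)))"
    by (rule sum.cong[OF refl]) (auto simp: Tm split: list.split)
  also have "\<dots> = ?R"
  proof (cases \<alpha>)
    case Nil then show ?thesis by simp
  next
    case (Cons x xs)
    show ?thesis
    proof (cases \<beta>)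
      case Nil then show ?thesis using Cons by simp
    next
      case (Cons y ys)
      then show ?thesis using \<open>\<alpha> = x # xs\<close> c by auto
    qed
  qed
  finally show ?thesis .
qed

lemma duality:
  assumes "is_comp \<gamma>" "is_comp \<alpha>" "is_comp \<beta>"
  shows "count (cop \<gamma>) (\<alpha>, \<beta>) = count (qsh \<alpha> \<beta>) \<gamma>"
  using assms
proof (induct \<gamma> arbitrary: \<alpha> \<beta>)
  case Nil
  then show ?case by (simp add: cnt_qsh_nil)
next
  case (Cons a \<gamma>)
  have a: "0 < a" and g: "is_comp \<gamma>" using Cons(2) by auto
  show ?case
  proof (cases \<alpha>)
    case Nil
    show ?thesis
    proof (cases \<beta>)
      case Nil
      then show ?thesis using \<open>\<alpha> = []\<close> a mid[OF a, of "[]" "[]" "cop \<gamma>"]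
        by (simp add: cop_count_Cons T0 Ta)
    next
      case (Cons y ys)
      then show ?thesis using \<open>\<alpha> = []\<close> a Cons.hyps[OF g, of "[]" ys] Cons.prems
          mid[OF a, of "[]" "y # ys" "cop \<gamma>"]
        by (auto simp add: cop_count_Cons T0 Ta mid)
    qed
  next
    case (Cons x xs)
    show ?thesis
    proof (cases \<beta>)
      case Nil
      then show ?thesis using \<open>\<alpha> = x # xs\<close> a Cons.hyps[OF g, of xs "[]"] Cons.prems
          mid[OF a, of "x # xs" "[]" "cop \<gamma>"]
        by (auto simp add: cop_count_Cons T0 Ta mid)
    next
      case (Cons y ys)
      then show ?thesis using \<open>\<alpha> = x # xs\<close> a Cons.hyps[OF g, of xs "y # ys"]
         Cons.hyps[OF g, of "x # xs" ys] Cons.hyps[OF g, of xs ys] Cons.prems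
          mid[OF a, of "x # xs" "y # ys" "cop \<gamma>"]
        by (cases "x = a"; cases "y = a") (simp_all add: cop_count_Cons T0 Ta cnt_cons)
    qed
  qed
qed

lemma qs_mult_lin: "qs_mult f g = lin (\<lambda>\<alpha>. lin (\<lambda>\<beta>. mf (qsh \<alpha> \<beta>)) g) f"
  by (auto simp: qs_mult_def lin_def mf_def fun_eq_iff sum_distrib_left mult.assoc)

lemma mf_qsh_zcomp: "is_comp \<alpha> \<Longrightarrow> is_comp \<beta> \<Longrightarrow> mf (qsh \<alpha> \<beta>) \<in> zcomp"
  using qsh_props by (auto simp: zcomp_iff)

lemma qs_mult_zcomp: "u \<in> zcomp \<Longrightarrow> v \<in> zcomp \<Longrightarrow> qs_mult u v \<in> zcomp"
  unfolding qs_mult_lin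
  apply (rule lin_zcomp)
   apply (simp add: zcomp_fs)
  apply (rule lin_zcomp)
   apply (simp add: zcomp_fs)
  apply (rule mf_qsh_zcomp)
   apply (auto simp: zcomp_iff)
  done

lemma zcomp_sc: "u \<in> zcomp \<Longrightarrow> sc c u \<in> zcomp"
  using goodP_zcomp by (simp add: goodP_def)

lemma qs_mult_gb: "qs_mult (gb \<alpha>) (gb \<beta>) = mf (qsh \<alpha> \<beta>)"
  by (simp add: qs_mult_lin)

lemma homog_zero: "homogeneous w f \<Longrightarrow> sum_list \<gamma> \<noteq> w \<Longrightarrow> f \<gamma> = 0"
  by (auto simp: homogeneous_def supp_def)

lemma qs_mult_homog:
  assumes a: "homogeneous a u" and b: "homogeneous b v"
  shows "homogeneous (a + b) (qs_mult u v)"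
  unfolding homogeneous_def
proof
  fix \<gamma> assume "\<gamma> \<in> supp (qs_mult u v)"
  then have "\<gamma> \<in> (\<Union>\<alpha>\<in>supp u. supp (lin (\<lambda>\<beta>. mf (qsh \<alpha> \<beta>)) v))"
    unfolding qs_mult_lin by (rule subsetD[OF supp_lin])
  then obtain \<alpha> where al: "\<alpha> \<in> supp u" "\<gamma> \<in> supp (lin (\<lambda>\<beta>. mf (qsh \<alpha> \<beta>)) v)" by blast
  have "\<gamma> \<in> (\<Union>\<beta>\<in>supp v. supp (mf (qsh \<alpha> \<beta>)))" using al(2) by (rule subsetD[OF supp_lin])
  then obtain \<beta> where be: "\<beta> \<in> supp v" "\<gamma> \<in># qsh \<alpha> \<beta>" by auto
  have "sum_list \<gamma> = sum_list \<alpha> + sum_list \<beta>" using qsh_props[OF be(2)] by blast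
  then show "sum_list \<gamma> = a + b" using al(1) be(1) a b by (simp add: homogeneous_def)
qed

lemma homog_one: "homogeneous 0 one_z"
  by (simp add: homogeneous_def one_z_gb)

definition wt :: "(nat list \<Rightarrow> int) \<Rightarrow> nat" where
  "wt x = (SOME w. homogeneous w x)"

lemma qs_prod_list_homog:
  "(\<And>x. x \<in> set xs \<Longrightarrow> homogeneous (w x) x) \<Longrightarrow>
     homogeneous (sum_list (map w xs)) (qs_prod_list xs)"
  by (induct xs) (auto simp: qs_prod_list_def homog_one intro: qs_mult_homog)

lemma one_z_zcomp: "one_z \<in> zcomp"
  by (simp add: one_z_gb)

lemma qs_prod_list_zcomp:
  "(\<And>x. x \<in> set xs \<Longrightarrow> x \<in> zcomp) \<Longrightarrow> qs_prod_list xs \<in> zcomp"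
  by (induct xs) (auto simp: qs_prod_list_def one_z_zcomp intro: qs_mult_zcomp)

lemma monom_list: "mset (SOME xs. mset xs = m) = m"
  by (rule someI_ex[OF ex_mset])

locale S =
  fixes \<Phi> :: "(nat list \<Rightarrow> int) set" and \<phi> :: "nat list \<Rightarrow> int" and n :: nat
    and \<chi> :: "(nat list \<Rightarrow> int) \<Rightarrow> int"
  assumes fpb: "free_poly_basis \<Phi>"
    and phi: "\<phi> \<in> \<Phi>" and hom: "homogeneous n \<phi>"
    and rh: "qs_ring_hom \<chi>" and c1: "\<chi> \<phi> = 1" and c0: "\<forall>\<phi>'\<in>\<Phi> - {\<phi>}. \<chi> \<phi>' = 0"
begin

lemma indep:
  assumes "finite M" "\<forall>m\<in>M. set_mset m \<subseteq> \<Phi>"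
    "(\<Sum>m\<in>M. scal (c m) (qs_monom m)) = (\<lambda>_. 0)" "m \<in> M"
  shows "c m = 0"
proof -
  have "\<forall>M c. finite M \<and> (\<forall>m\<in>M. set_mset m \<subseteq> \<Phi>) \<and>
            (\<Sum>m\<in>M. scal (c m) (qs_monom m)) = (\<lambda>_. 0) \<longrightarrow> (\<forall>m\<in>M. c m = 0)"
    using fpb unfolding free_poly_basis_def by (rule conjunct1[OF conjunct2[OF conjunct2]])
  then have "finite M \<and> (\<forall>m\<in>M. set_mset m \<subseteq> \<Phi>) \<and>
            (\<Sum>m\<in>M. scal (c m) (qs_monom m)) = (\<lambda>_. 0) \<longrightarrow> (\<forall>m\<in>M. c m = 0)"
    by (elim allE)
  then show ?thesis using assms by simp
qed

lemma span:
  assumes "f \<in> zcomp"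
  obtains M c where "finite M" "\<forall>m\<in>M. set_mset m \<subseteq> \<Phi>"
    "f = (\<Sum>m\<in>M. scal (c m) (qs_monom m))"
proof -
  have "\<forall>f\<in>zcomp. \<exists>M c. finite M \<and> (\<forall>m\<in>M. set_mset m \<subseteq> \<Phi>) \<and>
            f = (\<Sum>m\<in>M. scal (c m) (qs_monom m))"
    using fpb unfolding free_poly_basis_def by (rule conjunct2[OF conjunct2[OF conjunct2]])
  then show ?thesis using assms that by blast
qed

lemma chi_addi: "addi (\<lambda>u. u \<in> zcomp) \<chi>"
  using rh by (auto simp: qs_ring_hom_def addi_def)

lemma chi_one: "\<chi> (gb []) = 1"
  using rh by (simp add: qs_ring_hom_def one_z_gb)

lemma chi_mult: "u \<in> zcomp \<Longrightarrow> v \<in> zcomp \<Longrightarrow> \<chi> (qs_mult u v) = \<chi> u * \<chi> v"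
  using rh by (simp add: qs_ring_hom_def)

lemma chi_zero: "\<chi> 0 = 0"
  by (rule addi_zero[OF goodP_zcomp chi_addi])

lemma chi_sc: "u \<in> zcomp \<Longrightarrow> \<chi> (sc c u) = c * \<chi> u"
  by (rule addi_sc_int[OF goodP_zcomp chi_addi])

lemma chi_sum: "(\<And>i. i \<in> I \<Longrightarrow> F i \<in> zcomp) \<Longrightarrow> \<chi> (sum F I) = (\<Sum>i\<in>I. \<chi> (F i))"
  using addi_sum[OF goodP_zcomp chi_addi, of I F] by auto

lemma Phi_zcomp: "\<Phi> \<subseteq> zcomp"
  using fpb unfolding free_poly_basis_def by (rule conjunct1)

lemma Phi_homog: "x \<in> \<Phi> \<Longrightarrow> homogeneous (wt x) x"
proof -
  assume x: "x \<in> \<Phi>"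
  have "\<forall>\<phi>\<in>\<Phi>. \<exists>w. homogeneous w \<phi>"
    using fpb unfolding free_poly_basis_def by (rule conjunct1[OF conjunct2])
  then have "\<exists>w. homogeneous w x" using x by blast
  then show ?thesis unfolding wt_def by (rule someI_ex)
qed

lemma chi_prod_list:
  "(\<And>x. x \<in> set xs \<Longrightarrow> x \<in> zcomp) \<Longrightarrow> \<chi> (qs_prod_list xs) = prod_list (map \<chi> xs)"
proof (induct xs)
  case Nil then show ?case by (simp add: qs_prod_list_def one_z_gb chi_one)
next
  case (Cons x xs)
  have "qs_prod_list xs \<in> zcomp" using Cons by (intro qs_prod_list_zcomp) auto
  then show ?case using Cons by (simp add: qs_prod_list_def chi_mult)
qed

lemma monom:
  assumes m: "set_mset m \<subseteq> \<Phi>"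
  shows "qs_monom m \<in> zcomp" "\<chi> (qs_monom m) = prod_mset (image_mset \<chi> m)"
    "homogeneous (sum_mset (image_mset wt m)) (qs_monom m)"
proof -
  define xs where "xs = (SOME xs. mset xs = m)"
  have xs: "mset xs = m" unfolding xs_def by (rule monom_list)
  have s: "set xs \<subseteq> \<Phi>" using m xs by auto
  have q: "qs_monom m = qs_prod_list xs" by (simp add: qs_monom_def xs_def)
  show "qs_monom m \<in> zcomp" unfolding q using s Phi_zcomp by (intro qs_prod_list_zcomp) auto
  have "\<chi> (qs_monom m) = prod_list (map \<chi> xs)"
    unfolding q using s Phi_zcomp by (intro chi_prod_list) auto
  also have "\<dots> = prod_mset (image_mset \<chi> m)"
    by (simp flip: xs mset_map add: prod_mset_prod_list)
  finally show "\<chi> (qs_monom m) = prod_mset (image_mset \<chi> m)" .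
  have "homogeneous (sum_list (map wt xs)) (qs_monom m)"
    unfolding q using s by (intro qs_prod_list_homog Phi_homog) auto
  moreover have "sum_list (map wt xs) = sum_mset (image_mset wt m)"
    by (simp flip: xs mset_map add: sum_mset_sum_list)
  ultimately show "homogeneous (sum_mset (image_mset wt m)) (qs_monom m)" by simp
qed

lemma scal_sum_apply: "(\<Sum>m\<in>M. scal (c m) (f m)) \<gamma> = (\<Sum>m\<in>M. c m * f m \<gamma>)"
  by (simp add: sum_fun_apply scal_def)

lemma proj:
  assumes M: "finite M" "\<forall>m\<in>M. set_mset m \<subseteq> \<Phi>"
    and h: "h = (\<Sum>m\<in>M. scal (c m) (qs_monom m))" and hh: "homogeneous w h"
    and m0: "m0 \<in> M" "sum_mset (image_mset wt m0) \<noteq> w"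
  shows "c m0 = 0"
proof -
  let ?W = "\<lambda>m. sum_mset (image_mset wt m)"
  define M' where "M' = {m\<in>M. ?W m = ?W m0}"
  have M'M: "M' \<subseteq> M" by (auto simp: M'_def)
  have s0: "(\<Sum>m\<in>M'. scal (c m) (qs_monom m)) = (\<lambda>_. 0)"
  proof
    fix \<gamma>
    show "(\<Sum>m\<in>M'. scal (c m) (qs_monom m)) \<gamma> = 0"
    proof (cases "sum_list \<gamma> = ?W m0")
      case True
      have "(\<Sum>m\<in>M'. c m * qs_monom m \<gamma>) = (\<Sum>m\<in>M. c m * qs_monom m \<gamma>)"
      proof (rule sum.mono_neutral_left[OF M(1) M'M], rule ballI)
        fix m assume "m \<in> M - M'"
        then have "?W m \<noteq> sum_list \<gamma>" "set_mset m \<subseteq> \<Phi>" using True M by (auto simp: M'_def)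
        then have "qs_monom m \<gamma> = 0" by (intro homog_zero[OF monom(3)]) auto
        then show "c m * qs_monom m \<gamma> = 0" by simp
      qed
      also have "\<dots> = h \<gamma>" by (simp add: h scal_sum_apply)
      also have "\<dots> = 0" using True m0(2) by (intro homog_zero[OF hh]) simp
      finally show ?thesis by (simp add: scal_sum_apply)
    next
      case False
      have "(\<Sum>m\<in>M'. c m * qs_monom m \<gamma>) = 0"
      proof (rule sum.neutral, rule ballI)
        fix m assume "m \<in> M'"
        then have "?W m \<noteq> sum_list \<gamma>" "set_mset m \<subseteq> \<Phi>" using False M by (auto simp: M'_def)
        then have "qs_monom m \<gamma> = 0" by (intro homog_zero[OF monom(3)]) auto
        then show "c m * qs_monom m \<gamma> = 0" by simp
      qed
      then show ?thesis by (simp add: scal_sum_apply)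
    qed
  qed
  have f0: "finite M'" by (rule finite_subset[OF M'M M(1)])
  have s1: "\<forall>m\<in>M'. set_mset m \<subseteq> \<Phi>" using M M'M by blast
  have m0M: "m0 \<in> M'" using m0 by (simp add: M'_def)
  show ?thesis by (rule indep[OF f0 s1 s0 m0M])
qed

lemma phi_nonzero: "\<phi> \<noteq> 0"
  using c1 chi_zero by auto

lemma wt_phi: "wt \<phi> = n"
proof -
  obtain \<gamma> where g: "\<phi> \<gamma> \<noteq> 0" using phi_nonzero by (auto simp: fun_eq_iff)
  have "sum_list \<gamma> = wt \<phi>" using g homog_zero[OF Phi_homog[OF phi]] by blast
  moreover have "sum_list \<gamma> = n" using g homog_zero[OF hom] by blast
  ultimately have "sum_list \<gamma> = wt \<phi>" "sum_list \<gamma> = n" by auto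
  then show ?thesis by simp
qed

lemma n_pos: "0 < n"
proof (rule ccontr)
  assume "\<not> 0 < n"
  then have n0: "n = 0" by simp
  have phiz: "\<phi> \<in> zcomp" using phi Phi_zcomp by auto
  have z: "\<phi> \<gamma> = 0" if "\<gamma> \<noteq> []" for \<gamma>
  proof (rule ccontr)
    assume "\<phi> \<gamma> \<noteq> 0"
    then have "\<gamma> \<in> supp \<phi>" by (simp add: supp_def)
    then have "is_comp \<gamma>" "sum_list \<gamma> = 0" using phiz hom n0
      by (auto simp: zcomp_iff homogeneous_def)
    then have "length \<gamma> \<le> sum_list \<gamma>" "sum_list \<gamma> = 0" using comp_length_le by blast+
    then have "length \<gamma> = 0" by linarith
    then show False using that by simp
  qed
  have e: "\<phi> = sc (\<phi> []) (gb [])"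
    by (auto simp: sc_def gb_def fun_eq_iff z)
  have "\<chi> \<phi> = \<phi> []" by (subst e) (simp add: chi_sc chi_one)
  then have "\<phi> = gb []" using e c1 by (simp add: sc_def)
  then have p: "\<phi> = one_z" by (simp add: one_z_gb)
  have m0: "qs_monom {#} = one_z"
    using monom_list[of "{#}"] by (simp add: qs_monom_def qs_prod_list_def)
  have m1: "qs_monom {#\<phi>#} = one_z"
  proof -
    have "(SOME xs. mset xs = {#\<phi>#}) = [\<phi>]" using monom_list[of "{#\<phi>#}"] by simp
    then have "qs_monom {#\<phi>#} = qs_mult one_z one_z" by (simp add: qs_monom_def qs_prod_list_def p)
    also have "\<dots> = one_z" by (simp add: one_z_gb qs_mult_gb mf_single)
    finally show ?thesis .
  qed
  define c :: "(nat list \<Rightarrow> int) multiset \<Rightarrow> int" where "c = (\<lambda>m. if m = {#} then 1 else -1)"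
  have s: "(\<Sum>m\<in>{{#}, {#\<phi>#}}. scal (c m) (qs_monom m)) = (\<lambda>_. 0)"
    by (simp add: m0 m1 c_def scal_def fun_eq_iff)
  moreover have "\<forall>m\<in>{{#}, {#\<phi>#}}. set_mset m \<subseteq> \<Phi>" using phi by auto
  ultimately have "c {#} = 0" by (intro indep[OF _ _ s]) auto
  then show False by (simp add: c_def)
qed

lemma P1:
  assumes a: "is_comp \<alpha>" and nd: "\<not> n dvd sum_list \<alpha>"
  shows "\<chi> (gb \<alpha>) = 0"
proof -
  have "gb \<alpha> \<in> zcomp" using a by simp
  then obtain M c where M: "finite M" "\<forall>m\<in>M. set_mset m \<subseteq> \<Phi>"
    and h: "gb \<alpha> = (\<Sum>m\<in>M. scal (c m) (qs_monom m))"
    by (rule span)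
  have hh: "homogeneous (sum_list \<alpha>) (gb \<alpha>)" by (simp add: homogeneous_def)
  have "\<chi> (gb \<alpha>) = (\<Sum>m\<in>M. \<chi> (scal (c m) (qs_monom m)))"
    unfolding h
  proof (rule chi_sum)
    fix m assume "m \<in> M"
    then have "qs_monom m \<in> zcomp" using M(2) by (intro monom(1)) blast
    then show "scal (c m) (qs_monom m) \<in> zcomp" unfolding scal_sc by (rule zcomp_sc)
  qed
  also have "\<dots> = (\<Sum>m\<in>M. c m * prod_mset (image_mset \<chi> m))"
  proof (rule sum.cong[OF refl])
    fix m assume "m \<in> M"
    then have s: "set_mset m \<subseteq> \<Phi>" using M(2) by blast
    show "\<chi> (scal (c m) (qs_monom m)) = c m * prod_mset (image_mset \<chi> m)"
      unfolding scal_sc chi_sc[OF monom(1)[OF s]] monom(2)[OF s] ..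
  qed
  also have "\<dots> = 0"
  proof (rule sum.neutral, rule ballI)
    fix m assume mM: "m \<in> M"
    show "c m * prod_mset (image_mset \<chi> m) = 0"
    proof (cases "c m = 0")
      case False
      then have W: "sum_mset (image_mset wt m) = sum_list \<alpha>"
        using proj[OF M h hh mM] by blast
      show ?thesis
      proof (cases "set_mset m \<subseteq> {\<phi>}")
        case True
        then have "image_mset wt m = image_mset (\<lambda>_. n) m"
          using wt_phi by (intro image_mset_cong) auto
        then have "sum_list \<alpha> = size m * n" using W by simp
        then show ?thesis using nd by simp
      next
        case False
        then obtain x where "x \<in># m" "x \<noteq> \<phi>" by auto
        then have "\<chi> x = 0" "x \<in> \<Phi>" using c0 M mM by auto
        moreover have "\<chi> x \<in># image_mset \<chi> m" using \<open>x \<in># m\<close> by simp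
        ultimately have "0 \<in># image_mset \<chi> m" by simp
        then show ?thesis by simp
      qed
    qed simp
  qed
  finally show ?thesis .
qed

end

lemma lin_ext_sum: "finite A \<Longrightarrow> supp u \<subseteq> A \<Longrightarrow> lin L u = (\<Sum>x\<in>A. sc (u x) (L x))"
  by (simp add: lin_ext sum_fun_apply sc_def fun_eq_iff)

context S
begin

abbreviation Cw :: "nat \<Rightarrow> nat list set" where
  "Cw m \<equiv> {\<gamma>. is_comp \<gamma> \<and> sum_list \<gamma> = m}"

lemma dseq_supp: "supp (dseq \<chi> m) \<subseteq> Cw m"
  by (auto simp: supp_def dseq_def split: if_splits)

lemma dseq_zcomp: "dseq \<chi> m \<in> zcomp"
  unfolding zcomp_iff fs_def
  using dseq_supp[of m] finite_subset[OF dseq_supp finite_Cw] by auto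

lemma dseq_homog: "homogeneous m (dseq \<chi> m)"
  using dseq_supp[of m] by (auto simp: homogeneous_def)

lemma dseq_0: "dseq \<chi> 0 = one_z"
proof
  fix \<alpha>
  show "dseq \<chi> 0 \<alpha> = one_z \<alpha>"
  proof (cases "\<alpha> = []")
    case True
    then show ?thesis by (simp add: dseq_def bas_gb chi_one one_z_gb) (simp add: gb_def)
  next
    case False
    have "\<not> (is_comp \<alpha> \<and> sum_list \<alpha> = 0)"
      using False by (metis comp_length_le le_zero_eq length_0_conv)
    then have "dseq \<chi> 0 \<alpha> = 0" unfolding dseq_def by (simp only: if_False)
    then show ?thesis using False by (simp add: one_z_gb gb_def)
  qed
qed

lemma dseq_nil: "0 < m \<Longrightarrow> dseq \<chi> m [] = 0"
  by (simp add: dseq_def)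

lemma dseq_ndvd: "\<not> n dvd i \<Longrightarrow> dseq \<chi> i = (\<lambda>_. 0)"
  by (auto simp: dseq_def fun_eq_iff bas_gb P1)

lemma cop_dseq:
  "coprod (dseq \<chi> m) (\<alpha>, \<beta>) =
     (if is_comp \<alpha> \<and> is_comp \<beta> \<and> sum_list \<alpha> + sum_list \<beta> = m then \<chi> (gb \<alpha>) * \<chi> (gb \<beta>) else 0)"
proof -
  have "coprod (dseq \<chi> m) (\<alpha>, \<beta>) = (\<Sum>\<gamma>\<in>Cw m. dseq \<chi> m \<gamma> * CC \<gamma> (\<alpha>, \<beta>))"
    unfolding coprod_lin by (simp add: lin_ext[OF finite_Cw dseq_supp])
  also have "\<dots> = (\<Sum>\<gamma>\<in>Cw m. \<chi> (gb \<gamma>) * CC \<gamma> (\<alpha>, \<beta>))"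
    by (rule sum.cong) (auto simp: dseq_def bas_gb)
  also have "\<dots> = (if is_comp \<alpha> \<and> is_comp \<beta> \<and> sum_list \<alpha> + sum_list \<beta> = m
        then \<chi> (gb \<alpha>) * \<chi> (gb \<beta>) else 0)"
  proof (cases "is_comp \<alpha> \<and> is_comp \<beta>")
    case True
    have "(\<Sum>\<gamma>\<in>Cw m. \<chi> (gb \<gamma>) * CC \<gamma> (\<alpha>, \<beta>)) = (\<Sum>\<gamma>\<in>Cw m. mf (qsh \<alpha> \<beta>) \<gamma> * \<chi> (gb \<gamma>))"
      by (rule sum.cong[OF refl]) (use True in \<open>auto simp: CC_def mf_def duality\<close>)
    also have "\<dots> = (if sum_list \<alpha> + sum_list \<beta> = m then \<chi> (gb \<alpha>) * \<chi> (gb \<beta>) else 0)"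
    proof (cases "sum_list \<alpha> + sum_list \<beta> = m")
      case T2: True
      have sub: "supp (mf (qsh \<alpha> \<beta>)) \<subseteq> Cw m"
        using qsh_props True T2 by auto
      have "\<chi> (gb \<alpha>) * \<chi> (gb \<beta>) = \<chi> (mf (qsh \<alpha> \<beta>))"
        using chi_mult[of "gb \<alpha>" "gb \<beta>"] True by (simp add: qs_mult_gb)
      also have "mf (qsh \<alpha> \<beta>) = (\<Sum>\<gamma>\<in>Cw m. sc (mf (qsh \<alpha> \<beta>) \<gamma>) (gb \<gamma>))"
        using lin_ext_sum[OF finite_Cw sub, of gb] lin_gb_id[of "mf (qsh \<alpha> \<beta>)"] by simp
      also have "\<chi> \<dots> = (\<Sum>\<gamma>\<in>Cw m. \<chi> (sc (mf (qsh \<alpha> \<beta>) \<gamma>) (gb \<gamma>)))"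
        by (rule chi_sum) (auto intro: zcomp_sc)
      also have "\<dots> = (\<Sum>\<gamma>\<in>Cw m. mf (qsh \<alpha> \<beta>) \<gamma> * \<chi> (gb \<gamma>))"
        by (rule sum.cong[OF refl]) (auto simp: chi_sc)
      finally show ?thesis using T2 by simp
    next
      case F2: False
      have "mf (qsh \<alpha> \<beta>) \<gamma> = 0" if "\<gamma> \<in> Cw m" for \<gamma>
      proof (rule ccontr)
        assume "mf (qsh \<alpha> \<beta>) \<gamma> \<noteq> 0"
        then have "\<gamma> \<in># qsh \<alpha> \<beta>" by (simp add: mf_def)
        then show False using qsh_props[of \<gamma> \<alpha> \<beta>] that F2 by simp
      qed
      then show ?thesis using F2 by simp
    qed
    finally show ?thesis using True by simp
  next
    case False
    have "CC \<gamma> (\<alpha>, \<beta>) = 0" for \<gamma>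
    proof (rule ccontr)
      assume "CC \<gamma> (\<alpha>, \<beta>) \<noteq> 0"
      then have "(\<alpha>, \<beta>) \<in># cop \<gamma>" by (simp add: CC_def mf_def)
      then show False using cop_comp False by fastforce
    qed
    then show ?thesis using False by auto
  qed
  finally show ?thesis .
qed

lemma D_cop: "coprod (dseq \<chi> (k * n)) = (\<Sum>i\<in>{0..k}. tens (dseq \<chi> (i * n)) (dseq \<chi> ((k - i) * n)))"
proof (rule ext, clarify)
  fix \<alpha> \<beta>
  have np: "0 < n" by (rule n_pos)
  have ds: "dseq \<chi> j \<gamma> = (if is_comp \<gamma> \<and> sum_list \<gamma> = j then \<chi> (gb \<gamma>) else 0)" for j \<gamma>
    by (simp add: dseq_def bas_gb)
  have R: "(\<Sum>i\<in>{0..k}. tens (dseq \<chi> (i * n)) (dseq \<chi> ((k - i) * n))) (\<alpha>, \<beta>) =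
     (\<Sum>i\<in>{0..k}. dseq \<chi> (i * n) \<alpha> * dseq \<chi> ((k - i) * n) \<beta>)"
    by (simp add: sum_fun_apply tens_def)
  show "coprod (dseq \<chi> (k * n)) (\<alpha>, \<beta>) =
     (\<Sum>i\<in>{0..k}. tens (dseq \<chi> (i * n)) (dseq \<chi> ((k - i) * n))) (\<alpha>, \<beta>)"
    unfolding R cop_dseq
  proof (cases "is_comp \<alpha> \<and> is_comp \<beta> \<and> sum_list \<alpha> + sum_list \<beta> = k * n")
    case True
    show "(if is_comp \<alpha> \<and> is_comp \<beta> \<and> sum_list \<alpha> + sum_list \<beta> = k * n then \<chi> (gb \<alpha>) * \<chi> (gb \<beta>) else 0) =
      (\<Sum>i\<in>{0..k}. dseq \<chi> (i * n) \<alpha> * dseq \<chi> ((k - i) * n) \<beta>)"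
    proof (cases "n dvd sum_list \<alpha>")
      case dv: True
      then obtain i0 where i0: "sum_list \<alpha> = i0 * n" by (auto simp: dvd_def mult.commute)
      have le: "i0 \<le> k" using True i0 np
        by (metis le_add1 mult_le_cancel2)
      have "sum_list \<beta> = k * n - i0 * n" using True i0 by linarith
      then have b: "sum_list \<beta> = (k - i0) * n" by (simp add: diff_mult_distrib)
      have "(\<Sum>i\<in>{0..k}. dseq \<chi> (i * n) \<alpha> * dseq \<chi> ((k - i) * n) \<beta>) =
          (\<Sum>i\<in>{0..k}. if i = i0 then \<chi> (gb \<alpha>) * \<chi> (gb \<beta>) else 0)"
      proof (rule sum.cong[OF refl])
        fix i assume "i \<in> {0..k}"
        have "sum_list \<alpha> = i * n \<longleftrightarrow> i = i0" using i0 np by auto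
        then show "dseq \<chi> (i * n) \<alpha> * dseq \<chi> ((k - i) * n) \<beta> = (if i = i0 then \<chi> (gb \<alpha>) * \<chi> (gb \<beta>) else 0)"
          using True b by (auto simp: ds)
      qed
      also have "\<dots> = \<chi> (gb \<alpha>) * \<chi> (gb \<beta>)" using le by simp
      finally show ?thesis using True by simp
    next
      case nd: False
      have z: "\<chi> (gb \<alpha>) = 0" using P1 True nd by blast
      have "dseq \<chi> (i * n) \<alpha> = 0" for i using nd by (auto simp: ds)
      then show ?thesis using z by simp
    qed
  next
    case False
    have z: "dseq \<chi> (i * n) \<alpha> * dseq \<chi> ((k - i) * n) \<beta> = 0" if "i \<in> {0..k}" for i
    proof (rule ccontr)
      assume "dseq \<chi> (i * n) \<alpha> * dseq \<chi> ((k - i) * n) \<beta> \<noteq> 0"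
      then have "is_comp \<alpha>" "is_comp \<beta>" "sum_list \<alpha> = i * n" "sum_list \<beta> = (k - i) * n"
        by (auto simp: ds split: if_splits)
      moreover have "i * n + (k - i) * n = k * n" using that by (simp add: add_mult_distrib[symmetric])
      ultimately show False using False by simp
    qed
    have "(\<Sum>i\<in>{0..k}. dseq \<chi> (i * n) \<alpha> * dseq \<chi> ((k - i) * n) \<beta>) = 0"
      using z by (intro sum.neutral) blast
    then show "(if is_comp \<alpha> \<and> is_comp \<beta> \<and> sum_list \<alpha> + sum_list \<beta> = k * n then \<chi> (gb \<alpha>) * \<chi> (gb \<beta>) else 0) =
      (\<Sum>i\<in>{0..k}. dseq \<chi> (i * n) \<alpha> * dseq \<chi> ((k - i) * n) \<beta>)"
      using False by (simp only: if_False)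
  qed
qed

end

theorem mainTheorem7:
  fixes \<Phi> :: "(nat list \<Rightarrow> int) set" and \<phi> :: "nat list \<Rightarrow> int" and n :: nat
    and \<chi> :: "(nat list \<Rightarrow> int) \<Rightarrow> int"
  assumes "free_poly_basis \<Phi>"
    and "\<phi> \<in> \<Phi>" and "homogeneous n \<phi>"
    and "qs_ring_hom \<chi>" and "\<chi> \<phi> = 1" and "\<forall>\<phi>'\<in>\<Phi> - {\<phi>}. \<chi> \<phi>' = 0"
  shows "(\<forall>i. \<not> n dvd i \<longrightarrow> dseq \<chi> i = (\<lambda>_. 0))
    \<and> dseq \<chi> 0 = one_z
    \<and> (\<forall>k. dseq \<chi> (k * n) \<in> zcomp \<and> homogeneous (k * n) (dseq \<chi> (k * n))
          \<and> coprod (dseq \<chi> (k * n)) = (\<Sum>i\<in>{0..k}. tens (dseq \<chi> (i * n)) (dseq \<chi> ((k - i) * n))))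
    \<and> (\<exists>f. ns_hopf_endo f \<and> (\<forall>k\<ge>1. f (bas [k]) = dseq \<chi> (k * n))
         \<and> (\<forall>g. ns_hopf_endo g \<and> (\<forall>k\<ge>1. g (bas [k]) = dseq \<chi> (k * n))
               \<longrightarrow> (\<forall>x\<in>zcomp. g x = f x)))"
proof -
  interpret S \<Phi> \<phi> n \<chi>
    by (rule S.intro) (use assms in auto)
  have np: "0 < n" by (rule n_pos)
  have dps: "dps (\<lambda>k. dseq \<chi> (k * n))"
  proof (rule dps.intro)
    show "\<And>k. dseq \<chi> (k * n) \<in> zcomp" by (rule dseq_zcomp)
    show "dseq \<chi> (0 * n) = gb []" by (simp add: dseq_0 one_z_gb)
    show "\<And>k. coprod (dseq \<chi> (k * n)) = (\<Sum>i\<in>{0..k}. tens (dseq \<chi> (i * n)) (dseq \<chi> ((k - i) * n)))"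
      by (rule D_cop)
    show "\<And>k. 0 < k \<Longrightarrow> dseq \<chi> (k * n) [] = 0" using np by (simp add: dseq_nil)
  qed
  interpret dps "\<lambda>k. dseq \<chi> (k * n)" by (rule dps)
  have A: "\<forall>i. \<not> n dvd i \<longrightarrow> dseq \<chi> i = (\<lambda>_. 0)" using dseq_ndvd by blast
  have B: "\<forall>k. dseq \<chi> (k * n) \<in> zcomp \<and> homogeneous (k * n) (dseq \<chi> (k * n))
          \<and> coprod (dseq \<chi> (k * n)) = (\<Sum>i\<in>{0..k}. tens (dseq \<chi> (i * n)) (dseq \<chi> ((k - i) * n)))"
    using dseq_zcomp dseq_homog D_cop by blast
  have C: "ns_hopf_endo ff \<and> (\<forall>k\<ge>1. ff (bas [k]) = dseq \<chi> (k * n))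
         \<and> (\<forall>g. ns_hopf_endo g \<and> (\<forall>k\<ge>1. g (bas [k]) = dseq \<chi> (k * n))
               \<longrightarrow> (\<forall>x\<in>zcomp. g x = ff x))"
    using hopf ff_single unique by blast
  show ?thesis using A B C dseq_0 by blast
qed


end
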